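(* Let a group $G$ act freely on a topological space $X$ and let $p:X\to X/G$ be the projection onto the orbit space (quotient topology). Suppose $X/G$ has an open cover $\mathcal U$ consisting of connected sets such that for every pair $U,V\in\mathcal U$ the union $U\cup V$ is evenly covered by $p$. Then the action is an overlay action.
   Context: An open set $W\subseteq Y$ is evenly covered by $p:X\to Y$ if $p^{-1}(W)$ is a disjoint union of open sets each mapped homeomorphically onto $W$ by $p$. For a continuous map $p:X\to Y$: a slice of $p$ is an open set $U\subseteq X$ such that $p^{-1}(p(U))$ is the disjoint union of a family of open sets $U_s$ ($s\in S$), each mapped by $p$ homeomorphically onto $p(U)$, with $U=U_t$ for some $t\in S$. A covering structure of $p$ is an open cover $\mathcal S$ of $X$ by slices of $p$ such that for every $U\in\mathcal S$, $p^{-1}(p(U))$ is the disjoint union of a family $\{U_j\}_{j\in J}$ of elements of $\mathcal S$, each mapped homeomorphically onto $p(U)$. For a cover $\mathcal S$ and $x\in X$, $st(x,\mathcal S)=\bigcup\{U\in\mathcal S: x\in U\}$. For a free action of $G$ on $X$: a slice of the action is an open $U\subseteq X$ with $U\cap(g\cdot U)\neq\emptyset\Rightarrow g=1_G$. The action is an overlay action if there is a covering structure $\mathcal U$ of the projection $X\to X/G$ such that $st(x,\mathcal U)$ is a slice of the action for every $x\in X$. *)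

theory Defs
  imports "HOL-Analysis.Analysis" "HOL-Algebra.Group_Action"
begin

definition quotient_topology :: "'a topology \<Rightarrow> ('a \<Rightarrow> 'b) \<Rightarrow> 'b topology" where
  "quotient_topology X p =
     topology (\<lambda>U. U \<subseteq> p ` topspace X \<and> openin X {x \<in> topspace X. p x \<in> U})"

lemma istopology_quotient:
  "istopology (\<lambda>U. U \<subseteq> p ` topspace X \<and> openin X {x \<in> topspace X. p x \<in> U})"
proof -
  have int: "{x \<in> topspace X. p x \<in> S \<inter> T} =
             {x \<in> topspace X. p x \<in> S} \<inter> {x \<in> topspace X. p x \<in> T}" for S T
    by auto
  have un: "{x \<in> topspace X. p x \<in> \<Union>K} = \<Union>((\<lambda>U. {x \<in> topspace X. p x \<in> U}) ` K)" for K
    by auto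
  have l1: "S \<inter> T \<subseteq> p ` topspace X \<and> openin X {x \<in> topspace X. p x \<in> S \<inter> T}"
    if "S \<subseteq> p ` topspace X \<and> openin X {x \<in> topspace X. p x \<in> S}"
       "T \<subseteq> p ` topspace X \<and> openin X {x \<in> topspace X. p x \<in> T}" for S T
    using that by (simp only: int) (meson le_infI1 openin_Int)
  have l2: "\<Union>K \<subseteq> p ` topspace X \<and> openin X {x \<in> topspace X. p x \<in> \<Union>K}"
    if "\<forall>U\<in>K. U \<subseteq> p ` topspace X \<and> openin X {x \<in> topspace X. p x \<in> U}" for K
  proof
    show "\<Union>K \<subseteq> p ` topspace X" using that by blast
    show "openin X {x \<in> topspace X. p x \<in> \<Union>K}"
      unfolding un using that by (intro openin_Union) blast
  qed
  show ?thesis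
    unfolding istopology_def using l1 l2 by blast
qed

lemma openin_quotient_topology:
  "openin (quotient_topology X p) U \<longleftrightarrow>
     U \<subseteq> p ` topspace X \<and> openin X {x \<in> topspace X. p x \<in> U}"
  unfolding quotient_topology_def
  by (simp add: topology_inverse' istopology_quotient)

definition orbit_space :: "('g, 'm) monoid_scheme \<Rightarrow> ('g \<Rightarrow> 'a \<Rightarrow> 'a) \<Rightarrow> 'a topology \<Rightarrow> 'a set topology" where
  "orbit_space G \<phi> X = quotient_topology X (orbit G \<phi>)"

definition evenly_covered :: "'a topology \<Rightarrow> 'b topology \<Rightarrow> ('a \<Rightarrow> 'b) \<Rightarrow> 'b set \<Rightarrow> bool" where
  "evenly_covered X Y p W \<longleftrightarrow> openin Y W \<and>
     (\<exists>\<V>. pairwise disjnt \<V> \<and> \<Union>\<V> = {x \<in> topspace X. p x \<in> W} \<and>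
          (\<forall>V\<in>\<V>. openin X V \<and> homeomorphic_map (subtopology X V) (subtopology Y W) p))"

definition slice_map :: "'a topology \<Rightarrow> 'b topology \<Rightarrow> ('a \<Rightarrow> 'b) \<Rightarrow> 'a set \<Rightarrow> bool" where
  "slice_map X Y p U \<longleftrightarrow> openin X U \<and>
     (\<exists>\<V>. U \<in> \<V> \<and> pairwise disjnt \<V> \<and> \<Union>\<V> = {x \<in> topspace X. p x \<in> p ` U} \<and>
          (\<forall>V\<in>\<V>. openin X V \<and> homeomorphic_map (subtopology X V) (subtopology Y (p ` U)) p))"

definition covering_structure :: "'a topology \<Rightarrow> 'b topology \<Rightarrow> ('a \<Rightarrow> 'b) \<Rightarrow> 'a set set \<Rightarrow> bool" where
  "covering_structure X Y p \<S> \<longleftrightarrow>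
     \<Union>\<S> = topspace X \<and> (\<forall>U\<in>\<S>. slice_map X Y p U) \<and>
     (\<forall>U\<in>\<S>. \<exists>\<V>. \<V> \<subseteq> \<S> \<and> pairwise disjnt \<V> \<and> \<Union>\<V> = {x \<in> topspace X. p x \<in> p ` U} \<and>
          (\<forall>V\<in>\<V>. homeomorphic_map (subtopology X V) (subtopology Y (p ` U)) p))"

definition star :: "'a \<Rightarrow> 'a set set \<Rightarrow> 'a set" where
  "star x \<S> = \<Union>{U \<in> \<S>. x \<in> U}"

definition free_action :: "('g, 'm) monoid_scheme \<Rightarrow> ('g \<Rightarrow> 'a \<Rightarrow> 'a) \<Rightarrow> 'a set \<Rightarrow> bool" where
  "free_action G \<phi> E \<longleftrightarrow> (\<forall>g\<in>carrier G. \<forall>x\<in>E. \<phi> g x = x \<longrightarrow> g = \<one>\<^bsub>G\<^esub>)"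

definition slice_action :: "('g, 'm) monoid_scheme \<Rightarrow> ('g \<Rightarrow> 'a \<Rightarrow> 'a) \<Rightarrow> 'a topology \<Rightarrow> 'a set \<Rightarrow> bool" where
  "slice_action G \<phi> X U \<longleftrightarrow> openin X U \<and>
     (\<forall>g\<in>carrier G. U \<inter> \<phi> g ` U \<noteq> {} \<longrightarrow> g = \<one>\<^bsub>G\<^esub>)"

definition overlay_action :: "('g, 'm) monoid_scheme \<Rightarrow> ('g \<Rightarrow> 'a \<Rightarrow> 'a) \<Rightarrow> 'a topology \<Rightarrow> bool" where
  "overlay_action G \<phi> X \<longleftrightarrow>
     (\<exists>\<U>. covering_structure X (orbit_space G \<phi> X) (orbit G \<phi>) \<U> \<and>
          (\<forall>x\<in>topspace X. slice_action G \<phi> X (star x \<U>)))"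

end

theory Submission
  imports Defs
begin

lemma topspace_quotient_topology: "topspace (quotient_topology X p) = p ` topspace X"
proof -
  have "openin (quotient_topology X p) (p ` topspace X)"
    unfolding openin_quotient_topology
  proof
    have "{x \<in> topspace X. p x \<in> p ` topspace X} = topspace X" by blast
    then show "openin X {x \<in> topspace X. p x \<in> p ` topspace X}" by simp
  qed simp
  then have "p ` topspace X \<subseteq> topspace (quotient_topology X p)" by (simp add: openin_subset)
  moreover have "topspace (quotient_topology X p) \<subseteq> p ` topspace X"
    using openin_quotient_topology[of X p "topspace (quotient_topology X p)"] by simp
  ultimately show ?thesis by blast
qed

lemma conn_in_sheet:
  assumes "connectedin X A" "A \<subseteq> \<Union>\<W>" "pairwise disjnt \<W>" "\<And>W. W \<in> \<W> \<Longrightarrow> openin X W"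
    "W' \<in> \<W>" "x \<in> A" "x \<in> W'"
  shows "A \<subseteq> W'"
proof (rule ccontr)
  assume "\<not> A \<subseteq> W'"
  then obtain z where z: "z \<in> A" "z \<notin> W'" by blast
  let ?E2 = "\<Union>(\<W> - {W'})"
  have o2: "openin X ?E2" using assms(4) by (intro openin_Union) blast
  have "A \<subseteq> W' \<union> ?E2" using assms(2) by blast
  moreover have "W' \<inter> ?E2 = {}" using assms(3,5) by (auto simp: pairwise_def disjnt_def)
  moreover have "W' \<inter> A \<noteq> {}" using assms(6,7) by blast
  moreover have "?E2 \<inter> A \<noteq> {}" using z assms(2) by blast
  ultimately show False using assms(1) o2 assms(4)[OF assms(5)] unfolding connectedin by blast
qed

lemma generic:
  assumes cov: "\<Union>\<U> = topspace Y"
    and opc: "\<And>U. U \<in> \<U> \<Longrightarrow> openin Y U \<and> connectedin Y U"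
    and ev: "\<And>U V. \<lbrakk>U \<in> \<U>; V \<in> \<U>\<rbrakk> \<Longrightarrow> evenly_covered X Y p (U \<union> V)"
    and pX: "p ` topspace X \<subseteq> topspace Y"
  shows "\<exists>\<S>. covering_structure X Y p \<S> \<and>
            (\<forall>x\<in>topspace X. openin X (star x \<S>) \<and> inj_on p (star x \<S>))"
proof -
  define P where "P U \<V> \<longleftrightarrow> pairwise disjnt \<V> \<and> \<Union>\<V> = {x \<in> topspace X. p x \<in> U} \<and>
          (\<forall>V\<in>\<V>. openin X V \<and> homeomorphic_map (subtopology X V) (subtopology Y U) p)" for U \<V>
  define D where "D U = (SOME \<V>. P U \<V>)" for U
  have D: "P U (D U)" if "U \<in> \<U>" for U
  proof -
    have "\<exists>\<V>. P U \<V>" using ev[OF that that] unfolding evenly_covered_def P_def by simp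
    then show ?thesis unfolding D_def by (rule someI_ex)
  qed
  have sheet: "openin X A \<and> A \<subseteq> topspace X \<and> p ` A = U \<and> inj_on p A \<and> connectedin X A"
    if U: "U \<in> \<U>" and A: "A \<in> D U" for U A
  proof -
    have oA: "openin X A" and hm: "homeomorphic_map (subtopology X A) (subtopology Y U) p"
      using D[OF U] A unfolding P_def by auto
    have sA: "A \<subseteq> topspace X" using oA by (simp add: openin_subset)
    have sU: "U \<subseteq> topspace Y" using opc[OF U] by (simp add: openin_subset)
    have im: "p ` A = U"
      using homeomorphic_imp_surjective_map[OF hm] sA sU by (simp add: Int_absorb1 Int_absorb2 inf_commute)
    have inj: "inj_on p A"
        by (rule inj_on_subset[OF homeomorphic_imp_injective_map[OF hm]]) (use sA in auto)
    have "subtopology X A homeomorphic_space subtopology Y U"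
      using hm homeomorphic_map_maps homeomorphic_space_def by blast
    then have "connected_space (subtopology X A)"
      using homeomorphic_connected_space opc[OF U] by (auto simp: connectedin_def)
    then have "connectedin X A" using sA by (simp add: connectedin_def)
    then show ?thesis using oA sA im inj by blast
  qed
  define \<S> where "\<S> = (\<Union>U\<in>\<U>. D U - {{}})"
  have S_img: "\<exists>U\<in>\<U>. A \<in> D U \<and> A \<noteq> {} \<and> p ` A = U" if "A \<in> \<S>" for A
    using that sheet unfolding \<S>_def by blast
  have cs: "covering_structure X Y p \<S>"
    unfolding covering_structure_def
  proof (intro conjI ballI)
    show "\<Union>\<S> = topspace X"
    proof
      show "\<Union>\<S> \<subseteq> topspace X" using sheet unfolding \<S>_def by blast
      show "topspace X \<subseteq> \<Union>\<S>"
      proof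
        fix x assume x: "x \<in> topspace X"
        then obtain U where U: "U \<in> \<U>" "p x \<in> U" using pX cov by blast
        then have "x \<in> \<Union>(D U)" using D[OF U(1)] x unfolding P_def by blast
        then obtain A where "A \<in> D U" "x \<in> A" by blast
        then show "x \<in> \<Union>\<S>" using U unfolding \<S>_def by blast
      qed
    qed
  next
    fix A assume A: "A \<in> \<S>"
    then obtain U where U: "U \<in> \<U>" "A \<in> D U" "p ` A = U" using S_img by blast
    show "slice_map X Y p A"
      unfolding slice_map_def using sheet[OF U(1,2)] D[OF U(1)] U unfolding P_def by blast
  next
    fix A assume A: "A \<in> \<S>"
    then obtain U where U: "U \<in> \<U>" "A \<in> D U" "p ` A = U" using S_img by blast
    have "D U - {{}} \<subseteq> \<S>" using U unfolding \<S>_def by blast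
    moreover have "pairwise disjnt (D U - {{}})" using D[OF U(1)] unfolding P_def
      by (meson Diff_subset pairwise_subset)
    moreover have "\<Union>(D U - {{}}) = {x \<in> topspace X. p x \<in> p ` A}"
      using D[OF U(1)] U unfolding P_def by auto
    moreover have "\<forall>V\<in>D U - {{}}. homeomorphic_map (subtopology X V) (subtopology Y (p ` A)) p"
      using D[OF U(1)] U unfolding P_def by auto
    ultimately show "\<exists>\<V>\<subseteq>\<S>. pairwise disjnt \<V> \<and> \<Union>\<V> = {x \<in> topspace X. p x \<in> p ` A} \<and>
          (\<forall>V\<in>\<V>. homeomorphic_map (subtopology X V) (subtopology Y (p ` A)) p)" by blast
  qed
  have st: "openin X (star x \<S>) \<and> inj_on p (star x \<S>)" if x: "x \<in> topspace X" for x
  proof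
    show "openin X (star x \<S>)" unfolding star_def
      using S_img sheet by (intro openin_Union) blast
    show "inj_on p (star x \<S>)"
    proof
      fix y z assume y: "y \<in> star x \<S>" and z: "z \<in> star x \<S>" and pyz: "p y = p z"
      obtain A where A: "A \<in> \<S>" "x \<in> A" "y \<in> A" using y unfolding star_def by blast
      obtain B where B: "B \<in> \<S>" "x \<in> B" "z \<in> B" using z unfolding star_def by blast
      obtain U where U: "U \<in> \<U>" "A \<in> D U" "p ` A = U" using S_img A(1) by blast
      obtain V where V: "V \<in> \<U>" "B \<in> D V" "p ` B = V" using S_img B(1) by blast
      have "\<exists>\<W>. P (U \<union> V) \<W>" using ev[OF U(1) V(1)] unfolding evenly_covered_def P_def by simp
      then obtain \<W> where PW: "P (U \<union> V) \<W>" by blast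
      have W1: "pairwise disjnt \<W>" using PW unfolding P_def by simp
      have W2: "\<Union>\<W> = {x \<in> topspace X. p x \<in> U \<union> V}" using PW unfolding P_def by simp
      have W3: "openin X W \<and> homeomorphic_map (subtopology X W) (subtopology Y (U \<union> V)) p"
        if "W \<in> \<W>" for W using PW that unfolding P_def by simp
      have Wo: "openin X W" if "W \<in> \<W>" for W using W3[OF that] by simp
      have shA: "A \<subseteq> topspace X" "connectedin X A" using sheet[OF U(1,2)] by simp_all
      have shB: "B \<subseteq> topspace X" "connectedin X B" using sheet[OF V(1,2)] by simp_all
      have sA: "A \<subseteq> \<Union>\<W>" unfolding W2 using shA(1) U(3) by blast
      have sB: "B \<subseteq> \<Union>\<W>" unfolding W2 using shB(1) V(3) by blast
      obtain W' where W': "W' \<in> \<W>" "x \<in> W'" using sA A(2) by blast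
      have AW: "A \<subseteq> W'" by (rule conn_in_sheet[OF shA(2) sA W1 Wo W'(1) A(2) W'(2)])
      have BW: "B \<subseteq> W'" by (rule conn_in_sheet[OF shB(2) sB W1 Wo W'(1) B(2) W'(2)])
      have hm: "homeomorphic_map (subtopology X W') (subtopology Y (U \<union> V)) p" using W3[OF W'(1)] by simp
      have "W' \<subseteq> topspace X" using Wo[OF W'(1)] openin_subset by blast
      then have "inj_on p W'"
        by (intro inj_on_subset[OF homeomorphic_imp_injective_map[OF hm]]) auto
      moreover have "y \<in> W'" "z \<in> W'" using AW BW A(3) B(3) by blast+
      ultimately show "y = z" using pyz by (simp add: inj_on_def)
    qed
  qed
  show ?thesis using cs st by blast
qed

theorem proposition3p4:
  fixes G :: "('g, 'm) monoid_scheme" and \<phi> :: "'g \<Rightarrow> 'a \<Rightarrow> 'a" and X :: "'a topology"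
    and \<U> :: "'a set set set"
  assumes "group_action G (topspace X) \<phi>"
    and "\<And>g. g \<in> carrier G \<Longrightarrow> continuous_map X X (\<phi> g)"
    and "free_action G \<phi> (topspace X)"
    and "\<Union>\<U> = topspace (orbit_space G \<phi> X)"
    and "\<And>U. U \<in> \<U> \<Longrightarrow> openin (orbit_space G \<phi> X) U \<and> connectedin (orbit_space G \<phi> X) U"
    and "\<And>U V. \<lbrakk>U \<in> \<U>; V \<in> \<U>\<rbrakk> \<Longrightarrow> evenly_covered X (orbit_space G \<phi> X) (orbit G \<phi>) (U \<union> V)"
  shows "overlay_action G \<phi> X"
proof -
  interpret ga: group_action G "topspace X" \<phi> by (rule assms(1))
  have pX: "orbit G \<phi> ` topspace X \<subseteq> topspace (orbit_space G \<phi> X)"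
    by (simp add: orbit_space_def topspace_quotient_topology)
  obtain \<S> where S: "covering_structure X (orbit_space G \<phi> X) (orbit G \<phi>) \<S>"
    "\<forall>x\<in>topspace X. openin X (star x \<S>) \<and> inj_on (orbit G \<phi>) (star x \<S>)"
    using generic[OF assms(4) assms(5) assms(6) pX] by blast
  have orb: "orbit G \<phi> (\<phi> g y) = orbit G \<phi> y" if g: "g \<in> carrier G" and y: "y \<in> topspace X" for g y
  proof -
    have gy: "\<phi> g y \<in> topspace X" using ga.element_image g y by blast
    have 1: "\<phi> g y \<in> orbit G \<phi> y" using g unfolding orbit_def by blast
    have 2: "y \<in> orbit G \<phi> (\<phi> g y)" using ga.orbit_sym[OF y gy 1] .
    have sub: "orbit G \<phi> a \<subseteq> topspace X" if "a \<in> topspace X" for a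
      using that ga.element_image unfolding orbit_def by blast
    show ?thesis
    proof
      show "orbit G \<phi> (\<phi> g y) \<subseteq> orbit G \<phi> y"
        using ga.orbit_trans[OF y gy] 1 sub[OF gy] by blast
      show "orbit G \<phi> y \<subseteq> orbit G \<phi> (\<phi> g y)"
        using ga.orbit_trans[OF gy y] 2 sub[OF y] by blast
    qed
  qed
  show ?thesis
    unfolding overlay_action_def
  proof (intro exI conjI ballI)
    show "covering_structure X (orbit_space G \<phi> X) (orbit G \<phi>) \<S>" by (rule S(1))
  next
    fix x assume x: "x \<in> topspace X"
    show "slice_action G \<phi> X (star x \<S>)"
      unfolding slice_action_def
    proof (intro conjI ballI impI)
      show "openin X (star x \<S>)" using S(2) x by blast
    next
      fix g assume g: "g \<in> carrier G" and ne: "star x \<S> \<inter> \<phi> g ` star x \<S> \<noteq> {}"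
      then obtain y where y: "y \<in> star x \<S>" "\<phi> g y \<in> star x \<S>" by blast
      have yX: "y \<in> topspace X" using y(1) S(1) unfolding star_def covering_structure_def by blast
      have "\<phi> g y = y" using S(2) x y orb[OF g yX] by (meson inj_onD)
      then show "g = \<one>\<^bsub>G\<^esub>" using assms(3) g yX unfolding free_action_def by blast
    qed
  qed
qed

end
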